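(* Let $A$ and $B$ be finite-dimensional quantum systems of dimensions $d_A$ and $d_B$, and let $U$ and $V$ be unitary operators on $AB$, with respective operator-Schmidt coefficients $u_j$ and $v_j$, each ordered into decreasing order ($u_1\geq u_2\geq\cdots$ and $v_1\geq v_2\geq\cdots$). Then $$2\left(1-\frac{\sum_j u_j v_j}{d_A d_B}\right)\leq \|U-V\|^2,$$ where $\|M\|=\max_{\|\psi\|=1}\|M|\psi\rangle\|$ is the operator norm.
   Context: The Hilbert–Schmidt inner product on operators is $(Q,P)=\mathrm{tr}(Q^\dagger P)$; an orthonormal operator basis is a set $\{Q_j\}$ with $\mathrm{tr}(Q_j^\dagger Q_k)=\delta_{jk}$. Every operator $Q$ on $AB$ has an operator-Schmidt decomposition $Q=\sum_l q_l A_l\otimes B_l$ with $q_l\geq 0$ and $\{A_l\}$, $\{B_l\}$ orthonormal operator bases for $A$ and $B$ respectively; the numbers $q_l$ (the singular values of the coefficient matrix of $Q$ in product operator bases) are the operator-Schmidt coefficients of $Q$. *)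

theory Defs
  imports "HOL-Analysis.Analysis"
begin

text \<open>Operators on a finite-dimensional system with basis indexed by the finite type 'n
  are complex matrices of type complex^'n^'n. The composite system AB has index type 'a \<times> 'b.\<close>

definition cadj :: "complex^'n^'m \<Rightarrow> complex^'m^'n" where
  "cadj M = (\<chi> i j. cnj (M $ j $ i))"

definition hs_inner :: "complex^'n^'n \<Rightarrow> complex^'n^'n \<Rightarrow> complex" where
  "hs_inner Q P = trace (cadj Q ** P)"

definition kron :: "complex^'a^'a \<Rightarrow> complex^'b^'b \<Rightarrow> complex^('a \<times> 'b)^('a \<times> 'b)" where
  "kron X Y = (\<chi> p r. X $ fst p $ fst r * Y $ snd p $ snd r)"

definition unitary :: "complex^'n^'n \<Rightarrow> bool" where
  "unitary U \<longleftrightarrow> cadj U ** U = mat 1 \<and> U ** cadj U = mat 1"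

text \<open>An orthonormal operator basis, given as a family indexed by l < dim^2
  (dim^2 orthonormal operators in a dim^2-dimensional space).\<close>
definition orthonormal_op_basis :: "(nat \<Rightarrow> complex^'n^'n) \<Rightarrow> bool" where
  "orthonormal_op_basis E \<longleftrightarrow>
     (\<forall>j < CARD('n)^2. \<forall>k < CARD('n)^2. hs_inner (E j) (E k) = (if j = k then 1 else 0))"

definition op_schmidt_coeffs :: "complex^('a::finite \<times> 'b::finite)^('a \<times> 'b) \<Rightarrow> (nat \<Rightarrow> real) \<Rightarrow> bool" where
  "op_schmidt_coeffs Q q \<longleftrightarrow>
     (let N = min (CARD('a)^2) (CARD('b)^2) in
      (\<exists>(A :: nat \<Rightarrow> complex^'a^'a) (B :: nat \<Rightarrow> complex^'b^'b).
          orthonormal_op_basis A \<and> orthonormal_op_basis B \<and>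
          (\<forall>l < N. q l \<ge> 0) \<and>
          Q = (\<Sum>l<N. q l *\<^sub>R kron (A l) (B l))) \<and>
      (\<forall>i j. i \<le> j \<and> j < N \<longrightarrow> q j \<le> q i))"

definition op_norm :: "complex^'n^'m \<Rightarrow> real" where
  "op_norm M = Sup {norm (M *v \<psi>) | \<psi>. norm \<psi> = 1}"

end

theory Submission
  imports Defs
begin

definition csc :: "complex \<Rightarrow> complex^'n^'m \<Rightarrow> complex^'n^'m" where
  "csc c M = (\<chi> i j. c * M$i$j)"

lemma hs_formula: "hs_inner Q P = (\<Sum>i\<in>UNIV. \<Sum>k\<in>UNIV. cnj (Q$k$i) * P$k$i)"
  by (simp add: hs_inner_def trace_def matrix_matrix_mult_def cadj_def)

lemma hs_add_left: "hs_inner (Q1 + Q2) P = hs_inner Q1 P + hs_inner Q2 P"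
  by (simp add: hs_formula sum.distrib[symmetric] algebra_simps)
lemma hs_add_right: "hs_inner P (Q1 + Q2) = hs_inner P Q1 + hs_inner P Q2"
  by (simp add: hs_formula sum.distrib[symmetric] algebra_simps)
lemma hs_diff_left: "hs_inner (Q1 - Q2) P = hs_inner Q1 P - hs_inner Q2 P"
  by (simp add: hs_formula sum_subtractf[symmetric] algebra_simps)
lemma hs_diff_right: "hs_inner P (Q1 - Q2) = hs_inner P Q1 - hs_inner P Q2"
  by (simp add: hs_formula sum_subtractf[symmetric] algebra_simps)
lemma hs_zero_left: "hs_inner 0 P = 0"
  by (simp add: hs_formula)
lemma hs_zero_right: "hs_inner P 0 = 0"
  by (simp add: hs_formula)
lemma hs_sum_left: "hs_inner (sum f S) P = (\<Sum>s\<in>S. hs_inner (f s) P)"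
  by (induction S rule: infinite_finite_induct) (auto simp: hs_zero_left hs_add_left)
lemma hs_sum_right: "hs_inner P (sum f S) = (\<Sum>s\<in>S. hs_inner P (f s))"
  by (induction S rule: infinite_finite_induct) (auto simp: hs_zero_right hs_add_right)
lemma hs_csc_left: "hs_inner (csc c Q) P = cnj c * hs_inner Q P"
  by (simp add: hs_formula csc_def sum_distrib_left algebra_simps)
lemma hs_csc_right: "hs_inner P (csc c Q) = c * hs_inner P Q"
  by (simp add: hs_formula csc_def sum_distrib_left algebra_simps)
lemma scaleR_csc: "r *\<^sub>R (M::complex^'n^'m) = csc (of_real r) M"
  by (simp add: csc_def vec_eq_iff scaleR_conv_of_real[where 'a=complex])
lemma hs_scaleR_left: "hs_inner (r *\<^sub>R Q) P = of_real r * hs_inner Q P"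
  by (simp add: scaleR_csc hs_csc_left)
lemma hs_scaleR_right: "hs_inner P (r *\<^sub>R Q) = of_real r * hs_inner P Q"
  by (simp add: scaleR_csc hs_csc_right)
lemma hs_cnj: "hs_inner P Q = cnj (hs_inner Q P)"
  by (simp add: hs_formula mult.commute)
lemma cnj_mult_self: "cnj z * z = of_real ((cmod z)^2)"
  by (metis complex_norm_square mult.commute)
lemma hs_self: "hs_inner Q Q = of_real (\<Sum>i\<in>UNIV. \<Sum>k\<in>UNIV. (cmod (Q$k$i))^2)"
  by (simp only: hs_formula cnj_mult_self of_real_sum)
lemma hs_self_Re: "Re (hs_inner Q Q) = (\<Sum>i\<in>UNIV. \<Sum>k\<in>UNIV. (cmod (Q$k$i))^2)"
  by (simp add: hs_self)
lemma hs_self_nonneg: "Re (hs_inner Q Q) \<ge> 0"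
  by (simp add: hs_self_Re sum_nonneg)

lemma sum_prod_UNIV: "(\<Sum>p\<in>(UNIV::('a::finite \<times> 'b::finite) set). f p) = (\<Sum>a\<in>UNIV. \<Sum>b\<in>UNIV. f (a,b))"
  by (simp add: sum.cartesian_product)

lemma hs_kron: "hs_inner (kron A B) (kron C D) = hs_inner A C * hs_inner B D"
proof -
  have "hs_inner (kron A B) (kron C D) =
     (\<Sum>i1\<in>UNIV. \<Sum>i2\<in>UNIV. \<Sum>k1\<in>UNIV. \<Sum>k2\<in>UNIV.
        (cnj (A$k1$i1) * C$k1$i1) * (cnj (B$k2$i2) * D$k2$i2))"
    by (simp add: hs_formula kron_def sum_prod_UNIV algebra_simps)
  also have "\<dots> = hs_inner A C * hs_inner B D"
    by (simp only: hs_formula sum_product)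
  finally show ?thesis .
qed

lemma hs_unitary: "unitary U \<Longrightarrow> hs_inner U U = of_nat CARD('n)" for U :: "complex^'n^'n"
  by (simp add: unitary_def hs_inner_def trace_def mat_def)

lemma bessel:
  fixes E :: "nat \<Rightarrow> complex^'n^'n"
  assumes on: "orthonormal_op_basis E" and N: "N \<le> CARD('n)^2"
  shows "(\<Sum>m<N. (cmod (hs_inner (E m) X))^2) \<le> Re (hs_inner X X)"
proof -
  define c where "c m = hs_inner (E m) X" for m
  define h where "h = (\<Sum>m<N. csc (c m) (E m))"
  have orth: "hs_inner (E m) (E k) = (if m = k then 1 else 0)" if "m < N" "k < N" for m k
    using on N that unfolding orthonormal_op_basis_def by (meson less_le_trans)
  define S where "S = (\<Sum>m<N. (cmod (c m))^2)"
  have hX: "hs_inner h X = of_real S"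
    by (simp add: h_def S_def hs_sum_left hs_csc_left c_def cnj_mult_self of_real_sum)
  have cX: "hs_inner X (E m) = cnj (c m)" for m
    unfolding c_def using hs_cnj by metis
  have Xh: "hs_inner X h = of_real S"
    by (simp add: h_def S_def hs_sum_right hs_csc_right cX of_real_sum complex_norm_square del: of_real_power)
  have inner: "hs_inner (E m) h = c m" if "m < N" for m
  proof -
    have "(\<Sum>x<N. c x * hs_inner (E m) (E x)) = (\<Sum>x<N. if x = m then c x else 0)"
      by (rule sum.cong) (auto simp: orth that)
    then show ?thesis using that by (simp add: h_def hs_sum_right hs_csc_right)
  qed
  have "hs_inner h h = (\<Sum>m<N. cnj (c m) * hs_inner (E m) h)"
    unfolding h_def[of] by (simp only: hs_sum_left hs_csc_left)
  also have "\<dots> = (\<Sum>m<N. cnj (c m) * c m)"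
    by (rule sum.cong) (auto simp: inner)
  also have "\<dots> = of_real S"
    by (simp add: S_def cnj_mult_self of_real_sum del: of_real_power)
  finally have hh: "hs_inner h h = of_real S" .
  have "hs_inner (X - h) (X - h) = hs_inner X X - of_real S"
    by (simp add: hs_diff_left hs_diff_right hX Xh hh)
  with hs_self_nonneg[of "X - h"] show ?thesis
    by (simp add: S_def c_def)
qed

lemma norm_axis_c: "norm (axis i (1::complex)) = 1"
proof -
  have "(\<Sum>j\<in>UNIV. (norm (axis i (1::complex) $ j))^2) = (\<Sum>j\<in>UNIV. if j = i then 1 else 0)"
    by (rule sum.cong) (auto simp: axis_def)
  then show ?thesis by (simp add: norm_vec_def L2_set_def)
qed

lemma mv_bound:
  fixes M :: "complex^'n^'m"
  assumes "norm \<psi> = 1"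
  shows "norm (M *v \<psi>) \<le> (\<Sum>k\<in>UNIV. \<Sum>j\<in>UNIV. norm (M$k$j))"
proof -
  have "norm (M *v \<psi>) \<le> (\<Sum>k\<in>UNIV. norm ((M *v \<psi>)$k))"
    unfolding norm_vec_def by (rule L2_set_le_sum) auto
  also have "\<dots> \<le> (\<Sum>k\<in>UNIV. \<Sum>j\<in>UNIV. norm (M$k$j))"
  proof (rule sum_mono)
    fix k
    have "norm ((M *v \<psi>)$k) = norm (\<Sum>j\<in>UNIV. M$k$j * \<psi>$j)"
      by (simp add: matrix_vector_mult_def)
    also have "\<dots> \<le> (\<Sum>j\<in>UNIV. norm (M$k$j * \<psi>$j))"
      by (rule norm_sum)
    also have "\<dots> \<le> (\<Sum>j\<in>UNIV. norm (M$k$j))"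
    proof (rule sum_mono)
      fix j
      have "norm (\<psi>$j) \<le> norm \<psi>" unfolding norm_vec_def by (rule member_le_L2_set) simp_all
      then have "norm (\<psi>$j) \<le> 1" using assms by simp
      then show "norm (M$k$j * \<psi>$j) \<le> norm (M$k$j)"
        by (simp add: norm_mult mult_left_le)
    qed
    finally show "norm ((M *v \<psi>)$k) \<le> (\<Sum>j\<in>UNIV. norm (M$k$j))" .
  qed
  finally show ?thesis .
qed

lemma col_le_opnorm:
  fixes M :: "complex^'n^'m"
  shows "norm (M *v axis i 1) \<le> op_norm M"
  unfolding op_norm_def
proof (rule cSup_upper)
  show "norm (M *v axis i 1) \<in> {norm (M *v \<psi>) |\<psi>. norm \<psi> = 1}"
    using norm_axis_c by blast
  show "bdd_above {norm (M *v \<psi>) |\<psi>. norm \<psi> = 1}"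
    unfolding bdd_above_def using mv_bound by blast
qed

lemma col_formula:
  fixes M :: "complex^'n^'m"
  shows "(M *v axis i 1) $ k = M$k$i"
proof -
  have "(M *v axis i 1) $ k = (\<Sum>j\<in>UNIV. if j = i then M$k$j else 0)"
    unfolding matrix_vector_mult_def vec_lambda_beta by (rule sum.cong) (auto simp: axis_def)
  then show ?thesis by simp
qed

lemma hs_le_opnorm:
  fixes M :: "complex^'n^'n"
  shows "Re (hs_inner M M) \<le> real CARD('n) * (op_norm M)^2"
proof -
  have "Re (hs_inner M M) = (\<Sum>i\<in>UNIV. (norm (M *v axis i 1))^2)"
    unfolding hs_self_Re norm_vec_def L2_set_def
    by (simp add: col_formula sum_nonneg)
  also have "\<dots> \<le> (\<Sum>i\<in>(UNIV::'n set). (op_norm M)^2)"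
    by (intro sum_mono power_mono col_le_opnorm norm_ge_zero)
  also have "\<dots> = real CARD('n) * (op_norm M)^2" by simp
  finally show ?thesis .
qed



lemma sum4_swap:
  "(\<Sum>l\<in>A. \<Sum>m\<in>B. \<Sum>i\<in>C. \<Sum>k\<in>D. f l m i k) = (\<Sum>i\<in>C. \<Sum>k\<in>D. \<Sum>l\<in>A. \<Sum>m\<in>B. f l m i k)"
proof -
  have "(\<Sum>l\<in>A. \<Sum>m\<in>B. \<Sum>i\<in>C. \<Sum>k\<in>D. f l m i k) = (\<Sum>l\<in>A. \<Sum>i\<in>C. \<Sum>m\<in>B. \<Sum>k\<in>D. f l m i k)"
    by (rule sum.cong[OF refl], rule sum.swap)
  also have "\<dots> = (\<Sum>i\<in>C. \<Sum>l\<in>A. \<Sum>m\<in>B. \<Sum>k\<in>D. f l m i k)"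
    by (rule sum.swap)
  also have "\<dots> = (\<Sum>i\<in>C. \<Sum>l\<in>A. \<Sum>k\<in>D. \<Sum>m\<in>B. f l m i k)"
    by (rule sum.cong[OF refl], rule sum.cong[OF refl], rule sum.swap)
  also have "\<dots> = (\<Sum>i\<in>C. \<Sum>k\<in>D. \<Sum>l\<in>A. \<Sum>m\<in>B. f l m i k)"
    by (rule sum.cong[OF refl], rule sum.swap)
  finally show ?thesis .
qed

lemma sum3_swap:
  "(\<Sum>l\<in>A. \<Sum>i\<in>C. \<Sum>k\<in>D. f l i k) = (\<Sum>i\<in>C. \<Sum>k\<in>D. \<Sum>l\<in>A. f l i k)"
proof -
  have "(\<Sum>l\<in>A. \<Sum>i\<in>C. \<Sum>k\<in>D. f l i k) = (\<Sum>i\<in>C. \<Sum>l\<in>A. \<Sum>k\<in>D. f l i k)"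
    by (rule sum.swap)
  also have "\<dots> = (\<Sum>i\<in>C. \<Sum>k\<in>D. \<Sum>l\<in>A. f l i k)"
    by (rule sum.cong[OF refl], rule sum.swap)
  finally show ?thesis .
qed

lemma layer_rep:
  fixes u :: "nat \<Rightarrow> real" and N l :: nat
  defines "ue \<equiv> \<lambda>i. if i < N then u i else 0"
  assumes "l < N"
  shows "u l = (\<Sum>i<N. (ue i - ue (Suc i)) * of_bool (l \<le> i))"
proof -
  have "(\<Sum>i<N. (ue i - ue (Suc i)) * of_bool (l \<le> i)) = (\<Sum>i\<in>{l..<N}. ue i - ue (Suc i))"
    by (rule sum.mono_neutral_cong_right) auto
  also have "\<dots> = - (\<Sum>i\<in>{l..<N}. ue (Suc i) - ue i)"
    by (simp add: sum_negf[symmetric])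
  also have "\<dots> = ue l - ue N"
  proof -
    have "(\<Sum>i\<in>{l..<N}. ue (Suc i) - ue i) = ue N - ue l"
      by (rule sum_Suc_diff') (use assms(2) in simp)
    then show ?thesis by simp
  qed
  also have "\<dots> = u l" using assms by (simp add: ue_def)
  finally show ?thesis by simp
qed

lemma layer_nonneg:
  fixes u :: "nat \<Rightarrow> real"
  assumes "\<forall>l<N. u l \<ge> 0" "\<forall>i j. i \<le> j \<and> j < N \<longrightarrow> u j \<le> u i"
  shows "(if i < N then u i else 0) - (if Suc i < N then u (Suc i) else 0) \<ge> 0"
  using assms by auto

lemma block_bound:
  fixes W :: "nat \<Rightarrow> nat \<Rightarrow> real"
  assumes W0: "\<And>l m. W l m \<ge> 0"
    and row: "\<And>l. l < N \<Longrightarrow> (\<Sum>m<N. W l m) \<le> 1"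
    and "i \<le> k"
  shows "(\<Sum>l<N. \<Sum>m<N. of_bool (l \<le> i) * of_bool (m \<le> k) * W l m)
         \<le> (\<Sum>l<N. of_bool (l \<le> i) * of_bool (l \<le> k))"
proof (rule sum_mono)
  fix l assume l: "l \<in> {..<N}"
  have "(\<Sum>m<N. of_bool (l \<le> i) * of_bool (m \<le> k) * W l m) \<le> (\<Sum>m<N. of_bool (l \<le> i) * W l m)"
    by (rule sum_mono) (auto simp: W0)
  also have "\<dots> = of_bool (l \<le> i) * (\<Sum>m<N. W l m)"
    by (simp add: sum_distrib_left)
  also have "\<dots> \<le> of_bool (l \<le> i)"
    using row[of l] l by auto
  also have "\<dots> = of_bool (l \<le> i) * of_bool (l \<le> k)"
    using \<open>i \<le> k\<close> by auto
  finally show "(\<Sum>m<N. of_bool (l \<le> i) * of_bool (m \<le> k) * W l m) \<le> of_bool (l \<le> i) * of_bool (l \<le> k)" .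
qed

lemma rearr:
  fixes u v :: "nat \<Rightarrow> real" and W :: "nat \<Rightarrow> nat \<Rightarrow> real"
  assumes u0: "\<forall>l<N. u l \<ge> 0" and ud: "\<forall>i j. i \<le> j \<and> j < N \<longrightarrow> u j \<le> u i"
    and v0: "\<forall>l<N. v l \<ge> 0" and vd: "\<forall>i j. i \<le> j \<and> j < N \<longrightarrow> v j \<le> v i"
    and W0: "\<And>l m. W l m \<ge> 0"
    and row: "\<And>l. l < N \<Longrightarrow> (\<Sum>m<N. W l m) \<le> 1"
    and col: "\<And>m. m < N \<Longrightarrow> (\<Sum>l<N. W l m) \<le> 1"
  shows "(\<Sum>l<N. \<Sum>m<N. u l * v m * W l m) \<le> (\<Sum>l<N. u l * v l)"
proof -
  define a where "a i = (if i < N then u i else 0) - (if Suc i < N then u (Suc i) else 0)" for i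
  define b where "b i = (if i < N then v i else 0) - (if Suc i < N then v (Suc i) else 0)" for i
  have ur: "u l = (\<Sum>i<N. a i * of_bool (l \<le> i))" if "l < N" for l
    using layer_rep[OF that, of u] unfolding a_def by simp
  have vr: "v l = (\<Sum>i<N. b i * of_bool (l \<le> i))" if "l < N" for l
    using layer_rep[OF that, of v] unfolding b_def by simp
  have a0: "a i \<ge> 0" for i unfolding a_def using layer_nonneg[OF u0 ud] .
  have b0: "b i \<ge> 0" for i unfolding b_def using layer_nonneg[OF v0 vd] .
  define X where "X i k = (\<Sum>l<N. \<Sum>m<N. of_bool (l \<le> i) * of_bool (m \<le> k) * W l m)" for i k
  define Y where "Y i k = (\<Sum>l<N. of_bool (l \<le> i) * of_bool (l \<le> k) :: real)" for i k
  have "(\<Sum>l<N. \<Sum>m<N. u l * v m * W l m) =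
        (\<Sum>l<N. \<Sum>m<N. \<Sum>i<N. \<Sum>k<N. a i * b k * (of_bool (l \<le> i) * of_bool (m \<le> k) * W l m))"
  proof (intro sum.cong refl)
    fix l m assume "l \<in> {..<N}" "m \<in> {..<N}"
    then have lm: "l < N" "m < N" by auto
    then show "u l * v m * W l m = (\<Sum>i<N. \<Sum>k<N. a i * b k * (of_bool (l \<le> i) * of_bool (m \<le> k) * W l m))"
      unfolding ur[OF lm(1)] vr[OF lm(2)] sum_product unfolding sum_distrib_right by (simp only: mult_ac)
  qed
  also have "\<dots> = (\<Sum>i<N. \<Sum>k<N. \<Sum>l<N. \<Sum>m<N. a i * b k * (of_bool (l \<le> i) * of_bool (m \<le> k) * W l m))"
    by (rule sum4_swap)
  also have "\<dots> = (\<Sum>i<N. \<Sum>k<N. a i * b k * X i k)"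
    by (simp only: X_def sum_distrib_left)
  also have "\<dots> \<le> (\<Sum>i<N. \<Sum>k<N. a i * b k * Y i k)"
  proof (intro sum_mono mult_left_mono)
    fix i k
    show "0 \<le> a i * b k" using a0 b0 by simp
    show "X i k \<le> Y i k"
    proof (cases "i \<le> k")
      case True
      show ?thesis unfolding X_def Y_def by (rule block_bound[where N=N, OF W0 row True])
    next
      case False
      then have "k \<le> i" by simp
      have "X i k = (\<Sum>m<N. \<Sum>l<N. of_bool (m \<le> k) * of_bool (l \<le> i) * (\<lambda>m l. W l m) m l)"
        unfolding X_def by (subst sum.swap) (simp add: mult_ac)
      also have "\<dots> \<le> (\<Sum>m<N. of_bool (m \<le> k) * of_bool (m \<le> i))"
        by (rule block_bound[where N=N, OF W0 col \<open>k \<le> i\<close>])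
      also have "\<dots> = Y i k" unfolding Y_def by (simp add: mult_ac)
      finally show ?thesis .
    qed
  qed
  also have "\<dots> = (\<Sum>i<N. \<Sum>k<N. \<Sum>l<N. a i * b k * (of_bool (l \<le> i) * of_bool (l \<le> k)))"
    by (simp only: Y_def sum_distrib_left)
  also have "\<dots> = (\<Sum>l<N. \<Sum>i<N. \<Sum>k<N. a i * b k * (of_bool (l \<le> i) * of_bool (l \<le> k)))"
    by (rule sum3_swap[symmetric])
  also have "\<dots> = (\<Sum>l<N. u l * v l)"
  proof (intro sum.cong refl)
    fix l assume "l \<in> {..<N}"
    then have lm: "l < N" by auto
    then show "(\<Sum>i<N. \<Sum>k<N. a i * b k * (of_bool (l \<le> i) * of_bool (l \<le> k))) = u l * v l"
      unfolding ur[OF lm] vr[OF lm] sum_product by (simp only: mult_ac)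
  qed
  finally show ?thesis .
qed


theorem proposition1:
  fixes U V :: "complex^('a::finite \<times> 'b::finite)^('a \<times> 'b)"
    and u v :: "nat \<Rightarrow> real"
  assumes "unitary U" and "unitary V"
    and "op_schmidt_coeffs U u" and "op_schmidt_coeffs V v"
  shows "2 * (1 - (\<Sum>j < min (CARD('a)^2) (CARD('b)^2). u j * v j) / (CARD('a) * CARD('b)))
           \<le> (op_norm (U - V))^2"
proof -
  define N where "N = min (CARD('a)^2) (CARD('b)^2)"
  obtain A :: "nat \<Rightarrow> complex^'a^'a" and B :: "nat \<Rightarrow> complex^'b^'b"
    where A: "orthonormal_op_basis A" and B: "orthonormal_op_basis B"
      and u0: "\<forall>l<N. u l \<ge> 0" and UU: "U = (\<Sum>l<N. u l *\<^sub>R kron (A l) (B l))"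
      and ud: "\<forall>i j. i \<le> j \<and> j < N \<longrightarrow> u j \<le> u i"
    using assms(3) unfolding op_schmidt_coeffs_def Let_def N_def by blast
  obtain A' :: "nat \<Rightarrow> complex^'a^'a" and B' :: "nat \<Rightarrow> complex^'b^'b"
    where A': "orthonormal_op_basis A'" and B': "orthonormal_op_basis B'"
      and v0: "\<forall>l<N. v l \<ge> 0" and VV: "V = (\<Sum>l<N. v l *\<^sub>R kron (A' l) (B' l))"
      and vd: "\<forall>i j. i \<le> j \<and> j < N \<longrightarrow> v j \<le> v i"
    using assms(4) unfolding op_schmidt_coeffs_def Let_def N_def by blast
  define P where "P l m = hs_inner (A l) (A' m)" for l m
  define Q where "Q l m = hs_inner (B l) (B' m)" for l m
  define S where "S = (\<Sum>l<N. u l * v l)"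
  have NA: "N \<le> CARD('a)^2" and NB: "N \<le> CARD('b)^2" by (auto simp: N_def)
  have T: "hs_inner U V = (\<Sum>l<N. \<Sum>m<N. of_real (u l * v m) * (P l m * Q l m))"
    unfolding UU VV by (simp add: hs_sum_left hs_sum_right hs_scaleR_left hs_scaleR_right hs_kron
        P_def Q_def sum_distrib_left mult_ac) (rule sum.swap)
  have unitA: "Re (hs_inner (E l) (E l)) = 1" if "orthonormal_op_basis E" "l < N" "N \<le> CARD('n)^2"
    for E :: "nat \<Rightarrow> complex^'n^'n" and l
    using that unfolding orthonormal_op_basis_def by auto
  have swapc: "cmod (hs_inner X Y) = cmod (hs_inner Y X)" for X Y :: "complex^'n^'n"
    by (metis hs_cnj complex_mod_cnj)
  have r1: "(\<Sum>l<N. \<Sum>m<N. u l * v m * (cmod (P l m))^2) \<le> S"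
    unfolding S_def
  proof (rule rearr[OF u0 ud v0 vd])
    show "\<And>l m. 0 \<le> (cmod (P l m))^2" by simp
    show "(\<Sum>m<N. (cmod (P l m))^2) \<le> 1" if "l < N" for l
      using bessel[OF A' NA, of "A l"] unitA[OF A that NA] by (simp add: P_def swapc)
    show "(\<Sum>l<N. (cmod (P l m))^2) \<le> 1" if "m < N" for m
      using bessel[OF A NA, of "A' m"] unitA[OF A' that NA] by (simp add: P_def)
  qed
  have r2: "(\<Sum>l<N. \<Sum>m<N. u l * v m * (cmod (Q l m))^2) \<le> S"
    unfolding S_def
  proof (rule rearr[OF u0 ud v0 vd])
    show "\<And>l m. 0 \<le> (cmod (Q l m))^2" by simp
    show "(\<Sum>m<N. (cmod (Q l m))^2) \<le> 1" if "l < N" for l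
      using bessel[OF B' NB, of "B l"] unitA[OF B that NB] by (simp add: Q_def swapc)
    show "(\<Sum>l<N. (cmod (Q l m))^2) \<le> 1" if "m < N" for m
      using bessel[OF B NB, of "B' m"] unitA[OF B' that NB] by (simp add: Q_def)
  qed
  have "Re (hs_inner U V) \<le> cmod (hs_inner U V)" by (rule complex_Re_le_cmod)
  also have "\<dots> \<le> (\<Sum>l<N. \<Sum>m<N. cmod (of_real (u l * v m) * (P l m * Q l m)))"
    unfolding T by (rule order_trans[OF norm_sum sum_mono[OF norm_sum]])
  also have "\<dots> \<le> (\<Sum>l<N. \<Sum>m<N. u l * v m * (((cmod (P l m))^2 + (cmod (Q l m))^2) / 2))"
  proof (intro sum_mono)
    fix l m assume l: "l \<in> {..<N}" and m: "m \<in> {..<N}"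
    have ul: "u l \<ge> 0" and vm: "v m \<ge> 0" using u0 v0 l m by auto
    then have uv: "u l * v m \<ge> 0" by simp
    have eq: "cmod (of_real (u l * v m) * (P l m * Q l m)) = u l * v m * (cmod (P l m) * cmod (Q l m))"
      using ul vm by (simp add: norm_mult)
    have "cmod (P l m) * cmod (Q l m) \<le> ((cmod (P l m))^2 + (cmod (Q l m))^2) / 2"
      using sum_squares_bound[of "cmod (P l m)" "cmod (Q l m)"] by simp
    then show "cmod (of_real (u l * v m) * (P l m * Q l m)) \<le> u l * v m * (((cmod (P l m))^2 + (cmod (Q l m))^2) / 2)"
      unfolding eq using uv by (rule mult_left_mono)
  qed
  also have "\<dots> = ((\<Sum>l<N. \<Sum>m<N. u l * v m * (cmod (P l m))^2) + (\<Sum>l<N. \<Sum>m<N. u l * v m * (cmod (Q l m))^2)) / 2"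
  proof -
    have e: "u l * v m * ((p + q) / 2) = (u l * v m * p + u l * v m * q) / 2" for l m and p q :: real
      by (simp add: field_simps)
    show ?thesis unfolding e by (simp only: add_divide_distrib sum_divide_distrib sum.distrib)
  qed
  also have "\<dots> \<le> S" using r1 r2 by simp
  finally have ReT: "Re (hs_inner U V) \<le> S" .
  define d where "d = real CARD('a \<times> 'b)"
  have d: "d = real CARD('a) * real CARD('b)" by (simp add: d_def card_prod)
  have dpos: "d > 0" by (simp add: d_def)
  have "hs_inner (U - V) (U - V) = hs_inner U U - hs_inner U V - hs_inner V U + hs_inner V V"
    by (simp add: hs_diff_left hs_diff_right)
  then have "Re (hs_inner (U - V) (U - V)) = 2 * d - 2 * Re (hs_inner U V)"
    using hs_unitary[OF assms(1)] hs_unitary[OF assms(2)] hs_cnj[of V U] by (simp add: d_def)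
  with hs_le_opnorm[of "U - V"] ReT have "2 * d - 2 * S \<le> d * (op_norm (U - V))^2"
    by (simp add: d_def)
  then have "2 * (1 - S / d) \<le> (op_norm (U - V))^2"
    using dpos by (simp add: field_simps)
  then show ?thesis by (simp add: S_def N_def d)
qed

end
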